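(* For every observed law $\mathcal{P}$ of $(Y,D,Z)$ we have $U(\mathcal{P})=-L(\bar{\mathcal{P}})$, where $\bar{\mathcal{P}}$ is the law defined by $\bar{\mathcal{P}}(Y=y,D=d,Z=z)=\mathcal{P}(Y=y,D=1-d,Z=z)$ for all $y,d,z$.
   Context: Instrumental variable (IV) setting: $D\in\{0,1\}$ is a treatment, $Y$ an outcome taking values in a finite set $\{\gamma_0<\gamma_1<\dots<\gamma_{n-1}\}\subset\mathbb{R}$, and $Z$ an instrument taking values in $[\ell]:=\{0,\dots,\ell-1\}$. For $d\in\{0,1\}$, $z\in[\ell]$, $Y^{(d,z)}$ denotes the potential outcome of $Y$ under $D=d,Z=z$, and $D^{(z)}$ the potential treatment under $Z=z$. The IV model consists of: (Exclusion) $Y^{(d,z)}=Y^{(d,z')}$ a.s. for all $z,z'\in[\ell]$, $d\in\{0,1\}$, so one writes $Y^{(d)}$; (Random assignment) $Z$ is independent of $(Y^{(0)},Y^{(1)},D^{(0)},\dots,D^{(\ell-1)})$; (Consistency) $Y=(1-D)Y^{(0)}+DY^{(1)}$ and $D=\sum_{z\in[\ell]}\mathbb{1}(Z=z)D^{(z)}$. A full data law is a joint law of $(Y^{(0)},Y^{(1)},D^{(0)},\dots,D^{(\ell-1)},Z)$; it induces an observed law of $(Y,D,Z)$ via consistency. The average treatment effect is $\mathrm{ATE}=\mathbb{E}[Y^{(1)}-Y^{(0)}]$. For an observed law $\mathcal{P}$, $L(\mathcal{P})$ and $U(\mathcal{P})$ denote the infimum and supremum of ATE over all full data laws satisfying exclusion,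 random assignment and consistency that induce $\mathcal{P}$ (with $\inf\emptyset=+\infty$, $\sup\emptyset=-\infty$). *)

theory Defs
  imports "HOL-Probability.Probability"
begin

text \<open>A full data law is a pmf on tuples (Y0, Y1, Ds, Z), where Ds is the list
  of potential treatments D(0),...,D(l-1) (D = 1 encoded as True) and exclusion
  is built in by indexing potential outcomes by d only.\<close>

type_synonym full_data = "real \<times> real \<times> bool list \<times> nat"
type_synonym obs_data = "real \<times> bool \<times> nat"

definition full_support :: "real set \<Rightarrow> nat \<Rightarrow> full_data pmf \<Rightarrow> bool" where
  "full_support \<Gamma> l Q \<longleftrightarrow>
     set_pmf Q \<subseteq> {(y0, y1, ds, z). y0 \<in> \<Gamma> \<and> y1 \<in> \<Gamma> \<and> length ds = l \<and> z < l}"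

definition random_assignment :: "full_data pmf \<Rightarrow> bool" where
  "random_assignment Q \<longleftrightarrow>
     (\<forall>A B. measure_pmf.prob Q {(y0, y1, ds, z). (y0, y1, ds) \<in> A \<and> z \<in> B} =
            measure_pmf.prob Q {(y0, y1, ds, z). (y0, y1, ds) \<in> A} *
            measure_pmf.prob Q {(y0, y1, ds, z). z \<in> B})"

definition observe :: "full_data pmf \<Rightarrow> obs_data pmf" where
  "observe Q = map_pmf (\<lambda>(y0, y1, ds, z). (if ds ! z then y1 else y0, ds ! z, z)) Q"

definition ATE :: "full_data pmf \<Rightarrow> real" where
  "ATE Q = measure_pmf.expectation Q (\<lambda>(y0, y1, ds, z). y1 - y0)"

definition compatible :: "real set \<Rightarrow> nat \<Rightarrow> obs_data pmf \<Rightarrow> full_data pmf set" where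
  "compatible \<Gamma> l P = {Q. full_support \<Gamma> l Q \<and> random_assignment Q \<and> observe Q = P}"

text \<open>In ereal, Inf {} = \<infinity> and Sup {} = -\<infinity>, matching the paper's conventions.\<close>
definition L_bound :: "real set \<Rightarrow> nat \<Rightarrow> obs_data pmf \<Rightarrow> ereal" where
  "L_bound \<Gamma> l P = (INF Q \<in> compatible \<Gamma> l P. ereal (ATE Q))"

definition U_bound :: "real set \<Rightarrow> nat \<Rightarrow> obs_data pmf \<Rightarrow> ereal" where
  "U_bound \<Gamma> l P = (SUP Q \<in> compatible \<Gamma> l P. ereal (ATE Q))"

definition flip_treatment :: "obs_data pmf \<Rightarrow> obs_data pmf" where
  "flip_treatment P = map_pmf (\<lambda>(y, d, z). (y, \<not> d, z)) P"

end

theory Submission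
  imports Defs
begin

definition sw :: "full_data \<Rightarrow> full_data" where
  "sw = (\<lambda>(y0, y1, ds, z). (y1, y0, map Not ds, z))"

lemma sw_sw: "sw (sw x) = x"
  by (cases x) (auto simp: sw_def comp_def)

lemma map_sw_sw: "map_pmf sw (map_pmf sw Q) = Q"
  by (simp add: pmf.map_comp comp_def sw_sw)

lemma flip_flip: "flip_treatment (flip_treatment P) = P"
  by (simp add: flip_treatment_def pmf.map_comp comp_def split_beta)

lemma support_sw: "full_support G l Q \<Longrightarrow> full_support G l (map_pmf sw Q)"
  unfolding full_support_def sw_def by auto

lemma observe_sw:
  assumes "full_support G l Q"
  shows "observe (map_pmf sw Q) = flip_treatment (observe Q)"
  unfolding observe_def flip_treatment_def pmf.map_comp
proof (rule map_pmf_cong[OF refl])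
  fix x assume "x \<in> set_pmf Q"
  with assms obtain y0 y1 ds z where x: "x = (y0, y1, ds, z)" and "z < length ds"
    unfolding full_support_def by (cases x) auto
  then show "((\<lambda>(y0, y1, ds, z). (if ds ! z then y1 else y0, ds ! z, z)) \<circ> sw) x =
        ((\<lambda>(y, d, z). (y, \<not> d, z)) \<circ> (\<lambda>(y0, y1, ds, z). (if ds ! z then y1 else y0, ds ! z, z))) x"
    by (simp add: sw_def)
qed

lemma ATE_sw: "ATE (map_pmf sw Q) = - ATE Q"
proof -
  have "ATE (map_pmf sw Q) = measure_pmf.expectation Q (\<lambda>x. - (case x of (y0, y1, ds, z) \<Rightarrow> y1 - y0))"
    unfolding ATE_def by (simp add: sw_def split_beta)
  also have "\<dots> = - ATE Q" unfolding ATE_def by (rule integral_minus)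
  finally show ?thesis .
qed

lemma ra_sw:
  assumes "random_assignment Q"
  shows "random_assignment (map_pmf sw Q)"
  unfolding random_assignment_def
proof (intro allI)
  fix A :: "(real \<times> real \<times> bool list) set" and B :: "nat set"
  define A' where "A' = {(y0, y1, ds). (y1, y0, map Not ds) \<in> A}"
  have e1: "sw -` {(y0, y1, ds, z). (y0, y1, ds) \<in> A \<and> z \<in> B} = {(y0, y1, ds, z). (y0, y1, ds) \<in> A' \<and> z \<in> B}"
    by (auto simp: sw_def A'_def)
  have e2: "sw -` {(y0, y1, ds, z). (y0, y1, ds) \<in> A} = {(y0, y1, ds, z). (y0, y1, ds) \<in> A'}"
    by (auto simp: sw_def A'_def)
  have e3: "sw -` {(y0, y1, ds, z). z \<in> B} = {(y0, y1, ds, z). z \<in> B}"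
    by (auto simp: sw_def)
  show "measure_pmf.prob (map_pmf sw Q) {(y0, y1, ds, z). (y0, y1, ds) \<in> A \<and> z \<in> B} =
        measure_pmf.prob (map_pmf sw Q) {(y0, y1, ds, z). (y0, y1, ds) \<in> A} *
        measure_pmf.prob (map_pmf sw Q) {(y0, y1, ds, z). z \<in> B}"
    unfolding measure_map_pmf e1 e2 e3
    using assms unfolding random_assignment_def by blast
qed

lemma compat_sw: "Q \<in> compatible G l P \<Longrightarrow> map_pmf sw Q \<in> compatible G l (flip_treatment P)"
  unfolding compatible_def using support_sw ra_sw observe_sw by auto

lemma compat_eq: "compatible G l (flip_treatment P) = map_pmf sw ` compatible G l P"
proof
  show "map_pmf sw ` compatible G l P \<subseteq> compatible G l (flip_treatment P)"
    using compat_sw by blast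
next
  show "compatible G l (flip_treatment P) \<subseteq> map_pmf sw ` compatible G l P"
  proof
    fix Q assume "Q \<in> compatible G l (flip_treatment P)"
    then have "map_pmf sw Q \<in> compatible G l P"
      using compat_sw[of Q G l "flip_treatment P"] by (simp add: flip_flip)
    then show "Q \<in> map_pmf sw ` compatible G l P"
      using map_sw_sw[of Q] by (metis image_eqI)
  qed
qed

theorem proposition1:
  fixes \<Gamma> :: "real set" and l :: nat and P :: "obs_data pmf"
  assumes "finite \<Gamma>" and "\<Gamma> \<noteq> {}" and "l > 0"
    and "set_pmf P \<subseteq> \<Gamma> \<times> UNIV \<times> {..<l}"
  shows "U_bound \<Gamma> l P = - L_bound \<Gamma> l (flip_treatment P)"
proof -
  have "L_bound \<Gamma> l (flip_treatment P) = (INF Q \<in> compatible \<Gamma> l P. - ereal (ATE Q))"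
    unfolding L_bound_def compat_eq image_image by (simp add: ATE_sw)
  also have "\<dots> = - U_bound \<Gamma> l P"
    unfolding U_bound_def by (rule ereal_INF_uminus_eq)
  finally show ?thesis by simp
qed

end
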